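(* Let $n$ be even and let $G$ be a bipartite graph with parts $V_1=\{v^1_1,\dots,v^1_n\}$ and $V_2=\{v^2_1,\dots,v^2_n\}$, with maximum matching size $\alpha(G)$. Let $G'$ be the graph on vertex set $V_0\cup V_1\cup V_2\cup V_3\cup V_4$, where $V_0=\{v^0_1,\dots,v^0_{n/2}\}$, $V_3=\{v^3_1,\dots,v^3_n\}$, $V_4=\{v^4_1,\dots,v^4_{n/2}\}$ are new vertices, with edge set consisting of: $v^0_i v^1_{2i-1}$ and $v^0_i v^1_{2i}$ for all $i\in[n/2]$; all edges of $G$ between $V_1$ and $V_2$; $v^2_i v^3_i$ for all $i\in[n]$; and $v^3_i v^4_j$ for all $i\in[n]$, $j\in[n/2]$. Then (a) for every matching $M$ of $G$ there is a TSP tour of $G'$ of $(1,2)$-cost at most $5n-|M|$, and (b) every TSP tour of $G'$ has $(1,2)$-cost at least $5n-\alpha(G)$. Consequently the optimal $(1,2)$-TSP cost of $G'$ (which has $4n$ vertices) equals $5n-\alpha(G)$.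
   Context: For a graph $F=(V,E)$, the $(1,2)$-cost of a TSP tour (a cyclic ordering $(v_1,\dots,v_N)$ of $V$) is $\sum_{i=1}^N D(v_i,v_{i+1})$ with $v_{N+1}=v_1$, where $D(u,v)=1$ if $uv\in E$ and $D(u,v)=2$ otherwise; the optimal $(1,2)$-TSP cost is the minimum over tours. *)

theory Defs
  imports Main
begin

definition D12 :: "('v \<Rightarrow> 'v \<Rightarrow> bool) \<Rightarrow> 'v \<Rightarrow> 'v \<Rightarrow> nat" where
  "D12 Ed u v = (if Ed u v then 1 else 2)"

text \<open>A TSP tour of vertex set V: a cyclic ordering, represented by a list enumerating V once.\<close>
definition is_tour :: "'v set \<Rightarrow> 'v list \<Rightarrow> bool" where
  "is_tour V xs \<longleftrightarrow> distinct xs \<and> set xs = V"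

definition tour_cost :: "('v \<Rightarrow> 'v \<Rightarrow> bool) \<Rightarrow> 'v list \<Rightarrow> nat" where
  "tour_cost Ed xs = (\<Sum>i<length xs. D12 Ed (xs ! i) (xs ! ((i + 1) mod length xs)))"

definition opt_tsp :: "'v set \<Rightarrow> ('v \<Rightarrow> 'v \<Rightarrow> bool) \<Rightarrow> nat" where
  "opt_tsp V Ed = Min {tour_cost Ed xs | xs. is_tour V xs}"

text \<open>G is given by E :: nat => nat => bool, where E i j means v^1_i v^2_j is an edge
  (only i, j in {1..n} are relevant). A matching is a set of pairs (i,j) of edges,
  pairwise vertex-disjoint.\<close>
definition bip_matching :: "nat \<Rightarrow> (nat \<Rightarrow> nat \<Rightarrow> bool) \<Rightarrow> (nat \<times> nat) set \<Rightarrow> bool" where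
  "bip_matching n E M \<longleftrightarrow>
     M \<subseteq> {(i, j). i \<in> {1..n} \<and> j \<in> {1..n} \<and> E i j} \<and>
     (\<forall>(i, j) \<in> M. \<forall>(i', j') \<in> M. (i, j) \<noteq> (i', j') \<longrightarrow> i \<noteq> i' \<and> j \<noteq> j')"

definition max_matching :: "nat \<Rightarrow> (nat \<Rightarrow> nat \<Rightarrow> bool) \<Rightarrow> nat" where
  "max_matching n E = Max {card M | M. bip_matching n E M}"

text \<open>Vertex v^k_i is encoded as the pair (k, i).\<close>
definition Gp_verts :: "nat \<Rightarrow> (nat \<times> nat) set" where
  "Gp_verts n = ({0, 4} \<times> {1..n div 2}) \<union> ({1, 2, 3} \<times> {1..n})"

fun Gp_base :: "nat \<Rightarrow> (nat \<Rightarrow> nat \<Rightarrow> bool) \<Rightarrow> nat \<times> nat \<Rightarrow> nat \<times> nat \<Rightarrow> bool" where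
  "Gp_base n E (a, i) (b, j) =
     ((a = 0 \<and> b = 1 \<and> i \<in> {1..n div 2} \<and> (j = 2 * i - 1 \<or> j = 2 * i)) \<or>
      (a = 1 \<and> b = 2 \<and> i \<in> {1..n} \<and> j \<in> {1..n} \<and> E i j) \<or>
      (a = 2 \<and> b = 3 \<and> i \<in> {1..n} \<and> j = i) \<or>
      (a = 3 \<and> b = 4 \<and> i \<in> {1..n} \<and> j \<in> {1..n div 2}))"

definition Gp_edge :: "nat \<Rightarrow> (nat \<Rightarrow> nat \<Rightarrow> bool) \<Rightarrow> nat \<times> nat \<Rightarrow> nat \<times> nat \<Rightarrow> bool" where
  "Gp_edge n E u v \<longleftrightarrow> Gp_base n E u v \<or> Gp_base n E v u"

end

theory Submission
  imports Defs
begin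

definition nxt :: "'a list \<Rightarrow> nat \<Rightarrow> 'a" where
  "nxt xs i = xs ! ((i + 1) mod length xs)"

definition touch :: "'a list \<Rightarrow> 'a \<Rightarrow> nat set" where
  "touch xs v = {i. i < length xs \<and> (xs ! i = v \<or> nxt xs i = v)}"

lemma suc_mod_eq: assumes "i < (N::nat)" shows "(i+1) mod N = (if i + 1 = N then 0 else i + 1)"
proof (cases "i+1 = N")
  case True then show ?thesis by simp
next
  case False with assms have "i+1 < N" by simp
  then show ?thesis by simp
qed

lemma suc_mod_inj: assumes "i < (N::nat)" "j < N" "(i+1) mod N = (j+1) mod N" shows "i = j"
  using assms(3) unfolding suc_mod_eq[OF assms(1)] suc_mod_eq[OF assms(2)]
  by (auto split: if_splits)

lemma card_touch: assumes "distinct xs" shows "card (touch xs v) \<le> 2"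
proof -
  let ?N = "length xs"
  have "touch xs v = {i. i < ?N \<and> xs ! i = v} \<union> {i. i < ?N \<and> nxt xs i = v}"
    unfolding touch_def by auto
  moreover have "card {i. i < ?N \<and> xs ! i = v} \<le> 1"
    using assms by (auto simp: card_le_Suc0_iff_eq nth_eq_iff_index_eq)
  moreover have "card {i. i < ?N \<and> nxt xs i = v} \<le> 1"
  proof -
    have "i < ?N \<Longrightarrow> (i+1) mod ?N < ?N" for i by (auto intro: mod_less_divisor)
    have "a = b" if "a < ?N" "b < ?N" "nxt xs a = v" "nxt xs b = v" for a b
    proof -
      have "(a+1) mod ?N = (b+1) mod ?N"
        using that assms \<open>\<And>i. i < ?N \<Longrightarrow> (i+1) mod ?N < ?N\<close>[of a] \<open>\<And>i. i < ?N \<Longrightarrow> (i+1) mod ?N < ?N\<close>[of b]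
        unfolding nxt_def using nth_eq_iff_index_eq by metis
      then show ?thesis using suc_mod_inj that(1,2) by blast
    qed
    then show ?thesis by (auto simp: card_le_Suc0_iff_eq)
  qed
  ultimately show ?thesis by (metis (no_types) card_Un_le le_trans add_mono one_add_one)
qed

lemma mod_arith3: "3 \<le> (N::nat) \<Longrightarrow> i < N \<Longrightarrow> j < N \<Longrightarrow> i = (j+1) mod N \<Longrightarrow> j = (i+1) mod N \<Longrightarrow> False"
proof -
  assume a: "3 \<le> N" "i < N" "j < N" "i = (j+1) mod N" "j = (i+1) mod N"
  have i: "i = (if j + 1 = N then 0 else j + 1)" using trans[OF a(4) suc_mod_eq[OF a(3)]] .
  have j: "j = (if i + 1 = N then 0 else i + 1)" using trans[OF a(5) suc_mod_eq[OF a(2)]] .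
  have i': "(i = 0 \<and> j + 1 = N) \<or> (i = j + 1)" using i by (cases "j+1 = N") auto
  have j': "(j = 0 \<and> i + 1 = N) \<or> (j = i + 1)" using j by (cases "i+1 = N") auto
  show False using i' j' a(1) by presburger
qed

lemma touch_two: assumes "distinct xs" "3 \<le> length xs" "v \<noteq> y"
  shows "card (touch xs v \<inter> touch xs y) \<le> 1"
proof -
  let ?N = "length xs"
  have lt: "i < ?N \<Longrightarrow> (i+1) mod ?N < ?N" for i by (auto intro: mod_less_divisor)
  have "i = j" if i: "i \<in> touch xs v \<inter> touch xs y" and j: "j \<in> touch xs v \<inter> touch xs y" for i j
  proof -
    have il: "i < ?N" and jl: "j < ?N" using i j by (auto simp: touch_def)
    have ci: "(xs!i = v \<and> nxt xs i = y) \<or> (xs!i = y \<and> nxt xs i = v)" using i assms(3) by (auto simp: touch_def)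
    have cj: "(xs!j = v \<and> nxt xs j = y) \<or> (xs!j = y \<and> nxt xs j = v)" using j assms(3) by (auto simp: touch_def)
    have eq: "xs!a = xs!b \<Longrightarrow> a < ?N \<Longrightarrow> b < ?N \<Longrightarrow> a = b" for a b
      using assms(1) nth_eq_iff_index_eq by blast
    show ?thesis
    proof (cases "xs!i = v")
      case True
      show ?thesis
      proof (cases "xs!j = v")
        case True then show ?thesis using \<open>xs!i = v\<close> eq il jl by auto
      next
        case False
        then have "xs!j = y" "nxt xs j = v" using cj by auto
        have ni: "nxt xs i = y" using ci \<open>xs!i = v\<close> assms(3) by auto
        have "i = (j+1) mod ?N"
          using eq[of i "(j+1) mod ?N"] \<open>nxt xs j = v\<close> \<open>xs!i = v\<close> il lt[OF jl] unfolding nxt_def by simp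
        moreover have "j = (i+1) mod ?N"
          using eq[of j "(i+1) mod ?N"] ni \<open>xs!j = y\<close> jl lt[OF il] unfolding nxt_def by simp
        ultimately show ?thesis using mod_arith3[OF assms(2) il jl] by blast
      qed
    next
      case False
      then have ii: "xs!i = y" "nxt xs i = v" using ci by auto
      show ?thesis
      proof (cases "xs!j = y")
        case True then show ?thesis using ii eq il jl by auto
      next
        case False
        then have "xs!j = v" "nxt xs j = y" using cj by auto
        have "i = (j+1) mod ?N"
          using eq[of i "(j+1) mod ?N"] \<open>nxt xs j = y\<close> ii il lt[OF jl] unfolding nxt_def by simp
        moreover have "j = (i+1) mod ?N"
          using eq[of j "(i+1) mod ?N"] ii \<open>xs!j = v\<close> jl lt[OF il] unfolding nxt_def by simp
        ultimately show ?thesis using mod_arith3[OF assms(2) il jl] by blast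
      qed
    qed
  qed
  moreover have "finite (touch xs v \<inter> touch xs y)" by (auto simp: touch_def)
  ultimately show ?thesis by (auto simp: card_le_Suc0_iff_eq)
qed

lemma d1: "1 \<le> i \<Longrightarrow> (2*i - 1 + 1) div 2 = (i::nat)" by presburger
lemma d2: "(2*i + 1) div 2 = (i::nat)" by presburger
lemma base: "Gp_base n E (a,i) (b,j) \<Longrightarrow> (a=0 \<and> b=1 \<and> i = (j+1) div 2) \<or>
     (a=1 \<and> b=2 \<and> E i j \<and> i \<in> {1..n} \<and> j \<in> {1..n}) \<or> (a=2 \<and> b=3 \<and> i=j) \<or> (a=3 \<and> b=4)"
  proof -
    assume h: "Gp_base n E (a,i) (b,j)"
    show ?thesis
    proof (cases "a = 0 \<and> b = 1")
      case True
      then have "i \<in> {1..n div 2} \<and> (j = 2 * i - 1 \<or> j = 2 * i)" using h by simp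
      then have "i = (j+1) div 2" using d1 d2 by auto
      then show ?thesis using True by simp
    next
      case False
      then show ?thesis using h by auto
    qed
  qed

lemma Gp_edge_cases: "Gp_edge n E p q \<Longrightarrow>
 (fst p = 0 \<and> fst q = 1 \<and> snd p = (snd q + 1) div 2) \<or> (fst q = 0 \<and> fst p = 1 \<and> snd q = (snd p + 1) div 2)
 \<or> (fst p = 1 \<and> fst q = 2 \<and> E (snd p) (snd q) \<and> snd p \<in> {1..n} \<and> snd q \<in> {1..n})
 \<or> (fst q = 1 \<and> fst p = 2 \<and> E (snd q) (snd p) \<and> snd p \<in> {1..n} \<and> snd q \<in> {1..n})
 \<or> (fst p = 2 \<and> fst q = 3 \<and> snd p = snd q) \<or> (fst p = 3 \<and> fst q = 2 \<and> snd q = snd p)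
 \<or> (fst p = 3 \<and> fst q = 4) \<or> (fst p = 4 \<and> fst q = 3)"
proof -
  assume "Gp_edge n E p q"
  then have "Gp_base n E (fst p, snd p) (fst q, snd q) \<or> Gp_base n E (fst q, snd q) (fst p, snd p)"
    by (simp add: Gp_edge_def)
  then show ?thesis
  proof
    assume "Gp_base n E (fst p, snd p) (fst q, snd q)"
    from base[OF this] show ?thesis by blast
  next
    assume "Gp_base n E (fst q, snd q) (fst p, snd p)"
    from base[OF this] show ?thesis by blast
  qed
qed

lemma Gp_edge_sym: "Gp_edge n E p q = Gp_edge n E q p"
  unfolding Gp_edge_def by (rule disj_commute)

lemma card_Gp_verts: "even n \<Longrightarrow> card (Gp_verts n) = 4*n"
proof -
  assume "even n"
  have "card (Gp_verts n) = card ({0,4::nat} \<times> {1..n div 2}) + card ({1,2,3::nat} \<times> {1..n})"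
    unfolding Gp_verts_def by (rule card_Un_disjoint) auto
  also have "\<dots> = 4*n" using \<open>even n\<close> by (simp add: card_cartesian_product) presburger
  finally show ?thesis .
qed


lemma deg2_matching:
  fixes u :: "'i \<Rightarrow> 'a" and w :: "'i \<Rightarrow> 'b"
  assumes "finite B" "\<And>a. card {i\<in>B. u i = a} \<le> 2" "\<And>b. card {i\<in>B. w i = b} \<le> 2"
  shows "\<exists>M\<subseteq>B. inj_on u M \<and> inj_on w M \<and>
     card B \<le> card M + card {a. 2 \<le> card {i\<in>B. u i = a}} + card {b. 2 \<le> card {i\<in>B. w i = b}}"
  using assms
proof (induction "card B" arbitrary: B rule: less_induct)
  case less
  show ?case
  proof (cases "B = {}")
    case True then show ?thesis by auto
  next
    case False
    then obtain i0 where i0: "i0 \<in> B" by auto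
    define a where "a = u i0"
    define b where "b = w i0"
    define B' where "B' = {i\<in>B. u i \<noteq> a \<and> w i \<noteq> b}"
    define Ra where "Ra = {i\<in>B. u i = a}"
    define Cb where "Cb = {i\<in>B. w i = b}"
    define P1 where "P1 = {x. 2 \<le> card {i\<in>B. u i = x}}"
    define P2 where "P2 = {x. 2 \<le> card {i\<in>B. w i = x}}"
    define P1' where "P1' = {x. 2 \<le> card {i\<in>B'. u i = x}}"
    define P2' where "P2' = {x. 2 \<le> card {i\<in>B'. w i = x}}"
    have fB: "finite B" by fact
    have fB': "finite B'" using fB by (simp add: B'_def)
    have sub: "B' \<subset> B" using i0 by (auto simp: B'_def a_def)
    have lt: "card B' < card B" using psubset_card_mono[OF fB sub] .
    have mu: "card {i\<in>B'. u i = x} \<le> card {i\<in>B. u i = x}" for x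
      by (rule card_mono) (use fB in \<open>auto simp: B'_def\<close>)
    have mw: "card {i\<in>B'. w i = x} \<le> card {i\<in>B. w i = x}" for x
      by (rule card_mono) (use fB in \<open>auto simp: B'_def\<close>)
    have h2: "card {i\<in>B'. u i = x} \<le> 2" for x using mu[of x] less.prems(2)[of x] by linarith
    have h3: "card {i\<in>B'. w i = x} \<le> 2" for x using mw[of x] less.prems(3)[of x] by linarith
    obtain M' where M': "M' \<subseteq> B'" "inj_on u M'" "inj_on w M'"
      "card B' \<le> card M' + card P1' + card P2'"
      using less.hyps[OF lt fB' h2 h3] unfolding P1'_def P2'_def by blast
    have fP1: "finite P1"
    proof (rule finite_subset[of _ "u ` B"])
      show "P1 \<subseteq> u ` B"
      proof
        fix x assume "x \<in> P1"
        then have "2 \<le> card {i\<in>B. u i = x}" by (simp add: P1_def)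
        then have "{i\<in>B. u i = x} \<noteq> {}" by (intro notI) simp
        then show "x \<in> u ` B" by auto
      qed
    qed (use fB in auto)
    have fP2: "finite P2"
    proof (rule finite_subset[of _ "w ` B"])
      show "P2 \<subseteq> w ` B"
      proof
        fix x assume "x \<in> P2"
        then have "2 \<le> card {i\<in>B. w i = x}" by (simp add: P2_def)
        then have "{i\<in>B. w i = x} \<noteq> {}" by (intro notI) simp
        then show "x \<in> w ` B" by auto
      qed
    qed (use fB in auto)
    have P1s: "P1' \<subseteq> P1" using mu by (auto simp: P1'_def P1_def intro: le_trans)
    have P2s: "P2' \<subseteq> P2" using mw by (auto simp: P2'_def P2_def intro: le_trans)
    have "{i\<in>B'. u i = a} = {}" by (auto simp: B'_def)
    then have "card {i\<in>B'. u i = a} = 0" by (metis card.empty)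
    then have aP1': "a \<notin> P1'" unfolding P1'_def mem_Collect_eq by simp
    have "{i\<in>B'. w i = b} = {}" by (auto simp: B'_def)
    then have "card {i\<in>B'. w i = b} = 0" by (metis card.empty)
    then have bP2': "b \<notin> P2'" unfolding P2'_def mem_Collect_eq by simp
    have fRa: "finite Ra" "finite Cb" using fB by (auto simp: Ra_def Cb_def)
    have i0RC: "i0 \<in> Ra" "i0 \<in> Cb" using i0 by (auto simp: Ra_def Cb_def a_def b_def)
    have Ra1: "1 \<le> card Ra" using fRa(1) i0RC(1) card_gt_0_iff[of Ra] by auto
    have Cb1: "1 \<le> card Cb" using fRa(2) i0RC(2) card_gt_0_iff[of Cb] by auto
    have Ra2: "card Ra \<le> 2" using less.prems(2) by (simp add: Ra_def)
    have Cb2: "card Cb \<le> 2" using less.prems(3) by (simp add: Cb_def)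
    have c1: "card P1' + card Ra \<le> card P1 + 1"
    proof (cases "card Ra = 2")
      case True
      then have "a \<in> P1" by (simp add: P1_def Ra_def)
      have "P1' \<subseteq> P1 - {a}" using P1s aP1' by auto
      then have "card P1' \<le> card (P1 - {a})" using fP1 by (intro card_mono) auto
      also have "\<dots> = card P1 - 1" using \<open>a \<in> P1\<close> fP1 by simp
      finally show ?thesis using True \<open>a \<in> P1\<close> fP1 card_0_eq[of P1] by fastforce
    next
      case False
      then have "card Ra = 1" using Ra1 Ra2 by linarith
      moreover have "card P1' \<le> card P1" using P1s fP1 by (rule card_mono[rotated])
      ultimately show ?thesis by linarith
    qed
    have c2: "card P2' + card Cb \<le> card P2 + 1"
    proof (cases "card Cb = 2")
      case True
      then have "b \<in> P2" by (simp add: P2_def Cb_def)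
      have "P2' \<subseteq> P2 - {b}" using P2s bP2' by auto
      then have "card P2' \<le> card (P2 - {b})" using fP2 by (intro card_mono) auto
      also have "\<dots> = card P2 - 1" using \<open>b \<in> P2\<close> fP2 by simp
      finally show ?thesis using True \<open>b \<in> P2\<close> fP2 card_0_eq[of P2] by fastforce
    next
      case False
      then have "card Cb = 1" using Cb1 Cb2 by linarith
      moreover have "card P2' \<le> card P2" using P2s fP2 by (rule card_mono[rotated])
      ultimately show ?thesis by linarith
    qed
    have "B \<subseteq> B' \<union> (Ra \<union> Cb)" by (auto simp: B'_def Ra_def Cb_def)
    then have "card B \<le> card (B' \<union> (Ra \<union> Cb))" using fB fB' by (intro card_mono) (auto simp: Ra_def Cb_def)
    also have "\<dots> \<le> card B' + card (Ra \<union> Cb)" by (rule card_Un_le)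
    finally have cB: "card B \<le> card B' + card (Ra \<union> Cb)" .
    have "card (Ra \<union> Cb) + card (Ra \<inter> Cb) = card Ra + card Cb" using card_Un_Int[OF fRa] by simp
    moreover have "1 \<le> card (Ra \<inter> Cb)" using i0RC fRa card_gt_0_iff[of "Ra \<inter> Cb"]
      by auto
    ultimately have cRC: "card (Ra \<union> Cb) + 1 \<le> card Ra + card Cb" by linarith
    define M where "M = insert i0 M'"
    have i0M': "i0 \<notin> M'" using M'(1) by (auto simp: B'_def a_def)
    have fM': "finite M'" using M'(1) fB' finite_subset by blast
    have cM: "card M = card M' + 1" using i0M' fM' by (simp add: M_def)
    have "inj_on u M" unfolding M_def using M'(1,2) by (auto simp: B'_def a_def)
    moreover have "inj_on w M" unfolding M_def using M'(1,3) by (auto simp: B'_def b_def)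
    moreover have "M \<subseteq> B" using M'(1) i0 sub by (auto simp: M_def)
    moreover have "card B \<le> card M + card P1 + card P2"
      using cB cRC c1 c2 M'(4) cM by linarith
    ultimately show ?thesis unfolding P1_def P2_def by blast
  qed
qed

lemma cost_count_aux: "(\<Sum>i<L. if P i then 1 else 2::nat) + card {i. i < L \<and> P i} = 2 * L"
proof (induction L)
  case 0 then show ?case by simp
next
  case (Suc L)
  have "{i. i < Suc L \<and> P i} = (if P L then insert L {i. i < L \<and> P i} else {i. i < L \<and> P i})"
    by (auto simp: less_Suc_eq)
  then show ?case using Suc by (auto)
qed

lemma cost_count: "tour_cost Ed xs + card {i. i < length xs \<and> Ed (xs!i) (nxt xs i)} = 2 * length xs"
  unfolding tour_cost_def D12_def nxt_def using cost_count_aux by simp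

lemma matchings_finite: "finite {card M | M. bip_matching n E M}"
proof -
  have "{card M | M. bip_matching n E M} \<subseteq> card ` Pow ({1..n} \<times> {1..n})"
  proof
    fix k assume "k \<in> {card M | M. bip_matching n E M}"
    then obtain M where "k = card M" "bip_matching n E M" by auto
    then have "M \<in> Pow ({1..n} \<times> {1..n})" by (auto simp: bip_matching_def)
    then show "k \<in> card ` Pow ({1..n} \<times> {1..n})" using \<open>k = card M\<close> by blast
  qed
  then show ?thesis by (rule finite_subset) auto
qed

lemma matching_le_max: "bip_matching n E M \<Longrightarrow> card M \<le> max_matching n E"
  unfolding max_matching_def by (rule Max_ge[OF matchings_finite]) auto

lemma max_matching_attained: "\<exists>M. bip_matching n E M \<and> card M = max_matching n E"
proof -
  have "bip_matching n E {}" by (simp add: bip_matching_def)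
  then have "{card M | M. bip_matching n E M} \<noteq> {}" by auto
  from Max_in[OF matchings_finite this] show ?thesis unfolding max_matching_def by auto
qed


lemma lower_bound:
  assumes ev: "even n" and tour: "is_tour (Gp_verts n) xs"
  shows "5*n - max_matching n E \<le> tour_cost (Gp_edge n E) xs"
proof (cases "n = 0")
  case True then show ?thesis by simp
next
  case False
  with ev have n2: "2 \<le> n" by presburger
  have dist: "distinct xs" and setx: "set xs = Gp_verts n" using tour by (auto simp: is_tour_def)
  define N where "N = length xs"
  have N: "N = 4*n" using distinct_card[OF dist] setx card_Gp_verts[OF ev] N_def by simp
  have N3: "3 \<le> length xs" using N n2 N_def by simp
  have lt: "i < N \<Longrightarrow> (i+1) mod N < N" for i by (auto intro: mod_less_divisor)
  have xin: "i < N \<Longrightarrow> xs!i \<in> Gp_verts n" for i using setx N_def nth_mem by blast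
  have nin: "i < N \<Longrightarrow> nxt xs i \<in> Gp_verts n" for i using xin[OF lt] by (simp add: nxt_def N_def)
  have it1: "i < N \<Longrightarrow> i \<in> touch xs (xs!i)" for i by (auto simp: touch_def N_def)
  have it2: "i < N \<Longrightarrow> i \<in> touch xs (nxt xs i)" for i by (auto simp: touch_def N_def)
  have touchN: "i \<in> touch xs v \<Longrightarrow> i < N" for i v by (auto simp: touch_def N_def)
  have ftouch: "finite (touch xs v)" for v by (auto simp: touch_def)
  define I where "I = {i. i < N \<and> Gp_edge n E (xs!i) (nxt xs i)}"
  define A where "A = {i\<in>I. fst (xs!i) = 4 \<or> fst (nxt xs i) = 4}"
  define Z where "Z = {i\<in>I. fst (xs!i) = 0 \<or> fst (nxt xs i) = 0}"
  define B where "B = {i\<in>I. fst (xs!i) \<in> {1,2} \<and> fst (nxt xs i) \<in> {1,2}}"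
  define C where "C = {i\<in>I. fst (xs!i) \<in> {2,3} \<and> fst (nxt xs i) \<in> {2,3}}"
  define V1 where "V1 = {1::nat} \<times> {1..n}"
  define V2 where "V2 = {2::nat} \<times> {1..n}"
  define V4 where "V4 = {4::nat} \<times> {1..n div 2}"
  define tb where "tb v = card (B \<inter> touch xs v)" for v
  define P1 where "P1 = {v\<in>V1. 2 \<le> tb v}"
  define Q1 where "Q1 = {v\<in>V1. tb v < 2}"
  define P2 where "P2 = {v\<in>V2. 2 \<le> tb v}"
  define Q2 where "Q2 = {v\<in>V2. tb v < 2}"
  have fI: "finite I" by (auto simp: I_def)
  have fA: "finite A" "finite Z" "finite B" "finite C" using fI by (auto simp: A_def Z_def B_def C_def)
  have fV: "finite V1" "finite V2" "finite V4" by (auto simp: V1_def V2_def V4_def)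
  have v4: "p \<in> Gp_verts n \<Longrightarrow> fst p = 4 \<Longrightarrow> p \<in> V4" for p
    by (cases p) (auto simp: Gp_verts_def V4_def)
  have v1: "p \<in> Gp_verts n \<Longrightarrow> fst p = 1 \<Longrightarrow> p \<in> V1" for p
    by (cases p) (auto simp: Gp_verts_def V1_def)
  have v2: "p \<in> Gp_verts n \<Longrightarrow> fst p = 2 \<Longrightarrow> p \<in> V2" for p
    by (cases p) (auto simp: Gp_verts_def V2_def)
  have edI: "i \<in> I \<Longrightarrow> Gp_edge n E (xs!i) (nxt xs i)" for i by (simp add: I_def)
  have ltI: "i \<in> I \<Longrightarrow> i < N" for i by (simp add: I_def)

  have "I \<subseteq> A \<union> Z \<union> B \<union> C"
  proof
    fix i assume iI: "i \<in> I"
    from Gp_edge_cases[OF edI[OF iI]] show "i \<in> A \<union> Z \<union> B \<union> C"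
      using iI unfolding A_def Z_def B_def C_def by auto
  qed
  then have "card I \<le> card (A \<union> Z \<union> B \<union> C)" using fA by (intro card_mono) auto
  then have cI: "card I \<le> card A + card Z + card B + card C"
    using card_Un_le[of "A \<union> Z \<union> B" C] card_Un_le[of "A \<union> Z" B] card_Un_le[of A Z] by linarith

  have "A \<subseteq> (\<Union>v\<in>V4. touch xs v)"
  proof
    fix i assume iA: "i \<in> A"
    then have iI: "i \<in> I" by (simp add: A_def)
    show "i \<in> (\<Union>v\<in>V4. touch xs v)"
    proof (cases "fst (xs!i) = 4")
      case True then show ?thesis using v4[OF xin[OF ltI[OF iI]]] it1[OF ltI[OF iI]] by blast
    next
      case False then have "fst (nxt xs i) = 4" using iA by (simp add: A_def)
      then show ?thesis using v4[OF nin[OF ltI[OF iI]]] it2[OF ltI[OF iI]] by blast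
    qed
  qed
  then have "card A \<le> card (\<Union>v\<in>V4. touch xs v)" using fV ftouch by (intro card_mono) auto
  also have "\<dots> \<le> (\<Sum>v\<in>V4. card (touch xs v))" using fV by (intro card_UN_le) auto
  also have "\<dots> \<le> (\<Sum>v\<in>V4. 2)" using card_touch[OF dist] by (intro sum_mono) auto
  also have "\<dots> = n" using ev by (simp add: V4_def)
  finally have cA: "card A \<le> n" .

  have tb_lt: "tb v < 2" if "i \<in> touch xs v" "i \<notin> B" for i v
  proof -
    have "card (insert i (B \<inter> touch xs v)) \<le> card (touch xs v)"
      using that ftouch by (intro card_mono) auto
    moreover have "card (insert i (B \<inter> touch xs v)) = tb v + 1"
      using that(2) fA by (simp add: tb_def)
    ultimately show ?thesis using card_touch[OF dist, of v] by simp
  qed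

  have "Z \<subseteq> (\<Union>v\<in>Q1. Z \<inter> touch xs v)"
  proof
    fix i assume iZ: "i \<in> Z"
    then have iI: "i \<in> I" by (simp add: Z_def)
    have iB: "i \<notin> B" using iZ by (auto simp: Z_def B_def)
    have c: "fst (xs!i) = 1 \<or> fst (nxt xs i) = 1"
      using Gp_edge_cases[OF edI[OF iI]] iZ by (auto simp: Z_def)
    show "i \<in> (\<Union>v\<in>Q1. Z \<inter> touch xs v)"
    proof (cases "fst (xs!i) = 1")
      case True then show ?thesis using v1[OF xin[OF ltI[OF iI]]] it1[OF ltI[OF iI]] tb_lt iB iZ
        unfolding Q1_def by blast
    next
      case False then have "fst (nxt xs i) = 1" using c by simp
      then show ?thesis using v1[OF nin[OF ltI[OF iI]]] it2[OF ltI[OF iI]] tb_lt iB iZ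
        unfolding Q1_def by blast
    qed
  qed
  then have "card Z \<le> card (\<Union>v\<in>Q1. Z \<inter> touch xs v)" using fV fA by (intro card_mono) auto
  also have "\<dots> \<le> (\<Sum>v\<in>Q1. card (Z \<inter> touch xs v))" using fV by (intro card_UN_le) (auto simp: Q1_def)
  also have "\<dots> \<le> (\<Sum>v\<in>Q1. 1)"
  proof (intro sum_mono)
    fix v assume "v \<in> Q1"
    then have vV: "v \<in> V1" by (simp add: Q1_def)
    define y where "y = (0::nat, (snd v + 1) div 2)"
    have "Z \<inter> touch xs v \<subseteq> touch xs v \<inter> touch xs y"
    proof
      fix i assume iZ: "i \<in> Z \<inter> touch xs v"
      then have iI: "i \<in> I" by (simp add: Z_def)
      have f1: "fst v = 1" using vV by (auto simp: V1_def)
      have "xs!i = v \<or> nxt xs i = v" using iZ by (auto simp: touch_def)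
      moreover have "fst (xs!i) = 0 \<or> fst (nxt xs i) = 0" using iZ by (auto simp: Z_def)
      ultimately have "xs!i = y \<or> nxt xs i = y"
        using Gp_edge_cases[OF edI[OF iI]] f1 unfolding y_def by (auto simp: prod_eq_iff)
      then show "i \<in> touch xs v \<inter> touch xs y" using iZ ltI[OF iI] by (auto simp: touch_def N_def)
    qed
    moreover have "v \<noteq> y" using vV by (auto simp: y_def V1_def)
    ultimately have "card (Z \<inter> touch xs v) \<le> card (touch xs v \<inter> touch xs y)"
      using ftouch by (intro card_mono) auto
    also have "\<dots> \<le> 1" using touch_two[OF dist N3 \<open>v \<noteq> y\<close>] .
    finally show "card (Z \<inter> touch xs v) \<le> 1" .
  qed
  also have "\<dots> = card Q1" by simp
  finally have cZ: "card Z \<le> card Q1" .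

  have "C \<subseteq> (\<Union>v\<in>Q2. C \<inter> touch xs v)"
  proof
    fix i assume iC: "i \<in> C"
    then have iI: "i \<in> I" by (simp add: C_def)
    have c: "fst (xs!i) = 2 \<or> fst (nxt xs i) = 2" and c3: "fst (xs!i) = 3 \<or> fst (nxt xs i) = 3"
      using Gp_edge_cases[OF edI[OF iI]] iC by (auto simp: C_def)
    have iB: "i \<notin> B" using c3 by (auto simp: B_def)
    show "i \<in> (\<Union>v\<in>Q2. C \<inter> touch xs v)"
    proof (cases "fst (xs!i) = 2")
      case True then show ?thesis using v2[OF xin[OF ltI[OF iI]]] it1[OF ltI[OF iI]] tb_lt iB iC
        unfolding Q2_def by blast
    next
      case False then have "fst (nxt xs i) = 2" using c by simp
      then show ?thesis using v2[OF nin[OF ltI[OF iI]]] it2[OF ltI[OF iI]] tb_lt iB iC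
        unfolding Q2_def by blast
    qed
  qed
  then have "card C \<le> card (\<Union>v\<in>Q2. C \<inter> touch xs v)" using fV fA by (intro card_mono) auto
  also have "\<dots> \<le> (\<Sum>v\<in>Q2. card (C \<inter> touch xs v))" using fV by (intro card_UN_le) (auto simp: Q2_def)
  also have "\<dots> \<le> (\<Sum>v\<in>Q2. 1)"
  proof (intro sum_mono)
    fix v assume "v \<in> Q2"
    then have vV: "v \<in> V2" by (simp add: Q2_def)
    define y where "y = (3::nat, snd v)"
    have "C \<inter> touch xs v \<subseteq> touch xs v \<inter> touch xs y"
    proof
      fix i assume iC: "i \<in> C \<inter> touch xs v"
      then have iI: "i \<in> I" by (simp add: C_def)
      have f1: "fst v = 2" using vV by (auto simp: V2_def)
      have "xs!i = v \<or> nxt xs i = v" using iC by (auto simp: touch_def)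
      moreover have "fst (xs!i) \<in> {2,3} \<and> fst (nxt xs i) \<in> {2,3}" using iC by (auto simp: C_def)
      ultimately have "xs!i = y \<or> nxt xs i = y"
        using Gp_edge_cases[OF edI[OF iI]] f1 unfolding y_def by (auto simp: prod_eq_iff)
      then show "i \<in> touch xs v \<inter> touch xs y" using iC ltI[OF iI] by (auto simp: touch_def N_def)
    qed
    moreover have "v \<noteq> y" using vV by (auto simp: y_def V2_def)
    ultimately have "card (C \<inter> touch xs v) \<le> card (touch xs v \<inter> touch xs y)"
      using ftouch by (intro card_mono) auto
    also have "\<dots> \<le> 1" using touch_two[OF dist N3 \<open>v \<noteq> y\<close>] .
    finally show "card (C \<inter> touch xs v) \<le> 1" .
  qed
  also have "\<dots> = card Q2" by simp
  finally have cC: "card C \<le> card Q2" .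

  define u where "u i = (if fst (xs!i) = 1 then xs!i else nxt xs i)" for i
  define w where "w i = (if fst (xs!i) = 2 then xs!i else nxt xs i)" for i
  have Bp: "fst (u i) = 1 \<and> fst (w i) = 2 \<and> u i \<in> V1 \<and> w i \<in> V2 \<and> E (snd (u i)) (snd (w i))
      \<and> ((xs!i = u i \<and> nxt xs i = w i) \<or> (xs!i = w i \<and> nxt xs i = u i))" if iB: "i \<in> B" for i
  proof -
    have iI: "i \<in> I" using iB by (simp add: B_def)
    have "(fst (xs!i) = 1 \<and> fst (nxt xs i) = 2 \<and> E (snd (xs!i)) (snd (nxt xs i))) \<or>
          (fst (xs!i) = 2 \<and> fst (nxt xs i) = 1 \<and> E (snd (nxt xs i)) (snd (xs!i)))"
      using Gp_edge_cases[OF edI[OF iI]] iB by (auto simp: B_def)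
    moreover have "fst (xs!i) = 1 \<Longrightarrow> xs!i \<in> V1" "fst (nxt xs i) = 1 \<Longrightarrow> nxt xs i \<in> V1"
      "fst (xs!i) = 2 \<Longrightarrow> xs!i \<in> V2" "fst (nxt xs i) = 2 \<Longrightarrow> nxt xs i \<in> V2"
      using v1 v2 xin[OF ltI[OF iI]] nin[OF ltI[OF iI]] by blast+
    ultimately show ?thesis unfolding u_def w_def by auto
  qed
  have fibu: "{i\<in>B. u i = v} = B \<inter> touch xs v" if "fst v = 1" for v
  proof
    show "{i\<in>B. u i = v} \<subseteq> B \<inter> touch xs v"
      using Bp it1 it2 ltI unfolding B_def by fastforce
    show "B \<inter> touch xs v \<subseteq> {i\<in>B. u i = v}"
    proof
      fix i assume i: "i \<in> B \<inter> touch xs v"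
      then have "xs!i = v \<or> nxt xs i = v" by (auto simp: touch_def)
      then have "u i = v" using Bp[of i] i that by auto
      then show "i \<in> {i\<in>B. u i = v}" using i by simp
    qed
  qed
  have fibw: "{i\<in>B. w i = v} = B \<inter> touch xs v" if "fst v = 2" for v
  proof
    show "{i\<in>B. w i = v} \<subseteq> B \<inter> touch xs v"
      using Bp it1 it2 ltI unfolding B_def by fastforce
    show "B \<inter> touch xs v \<subseteq> {i\<in>B. w i = v}"
    proof
      fix i assume i: "i \<in> B \<inter> touch xs v"
      then have "xs!i = v \<or> nxt xs i = v" by (auto simp: touch_def)
      then have "w i = v" using Bp[of i] i that by auto
      then show "i \<in> {i\<in>B. w i = v}" using i by simp
    qed
  qed
  have cu: "card {i\<in>B. u i = x} \<le> 2" for x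
  proof (cases "fst x = 1")
    case True
    then have "card {i\<in>B. u i = x} \<le> card (touch xs x)" unfolding fibu[OF True]
      using ftouch by (intro card_mono) auto
    then show ?thesis using card_touch[OF dist, of x] by simp
  next
    case False then have "{i\<in>B. u i = x} = {}" using Bp by auto
    then show ?thesis by (metis card.empty le0)
  qed
  have cw: "card {i\<in>B. w i = x} \<le> 2" for x
  proof (cases "fst x = 2")
    case True
    then have "card {i\<in>B. w i = x} \<le> card (touch xs x)" unfolding fibw[OF True]
      using ftouch by (intro card_mono) auto
    then show ?thesis using card_touch[OF dist, of x] by simp
  next
    case False then have "{i\<in>B. w i = x} = {}" using Bp by auto
    then show ?thesis by (metis card.empty le0)
  qed
  obtain M where M: "M \<subseteq> B" "inj_on u M" "inj_on w M"
    "card B \<le> card M + card {a. 2 \<le> card {i\<in>B. u i = a}} + card {b. 2 \<le> card {i\<in>B. w i = b}}"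
    using deg2_matching[OF fA(3) cu cw] by blast
  have PU: "{a. 2 \<le> card {i\<in>B. u i = a}} \<subseteq> P1"
  proof
    fix a assume "a \<in> {a. 2 \<le> card {i\<in>B. u i = a}}"
    then have h: "2 \<le> card {i\<in>B. u i = a}" by simp
    then have "{i\<in>B. u i = a} \<noteq> {}" by (intro notI) simp
    then obtain i where "i \<in> B" "u i = a" by auto
    then have "a \<in> V1" "fst a = 1" using Bp by auto
    then show "a \<in> P1" using h fibu unfolding P1_def tb_def by auto
  qed
  have PW: "{a. 2 \<le> card {i\<in>B. w i = a}} \<subseteq> P2"
  proof
    fix a assume "a \<in> {a. 2 \<le> card {i\<in>B. w i = a}}"
    then have h: "2 \<le> card {i\<in>B. w i = a}" by simp
    then have "{i\<in>B. w i = a} \<noteq> {}" by (intro notI) simp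
    then obtain i where "i \<in> B" "w i = a" by auto
    then have "a \<in> V2" "fst a = 2" using Bp by auto
    then show "a \<in> P2" using h fibw unfolding P2_def tb_def by auto
  qed
  have fP: "finite P1" "finite P2" using fV by (auto simp: P1_def P2_def)
  define g where "g i = (snd (u i), snd (w i))" for i
  have ginj: "inj_on g M"
  proof (rule inj_onI)
    fix i j assume ij: "i \<in> M" "j \<in> M" "g i = g j"
    then have "fst (u i) = 1" "fst (u j) = 1" using Bp M(1) by auto
    then have "u i = u j" using ij(3) unfolding g_def by (simp add: prod_eq_iff)
    then show "i = j" using M(2) ij(1,2) by (simp add: inj_on_eq_iff)
  qed
  have "bip_matching n E (g ` M)"
    unfolding bip_matching_def
  proof (intro conjI)
    show "g ` M \<subseteq> {(i, j). i \<in> {1..n} \<and> j \<in> {1..n} \<and> E i j}"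
    proof
      fix x assume "x \<in> g ` M"
      then obtain i where i: "i \<in> M" "x = g i" by auto
      then have "u i \<in> V1" "w i \<in> V2" "E (snd (u i)) (snd (w i))" using Bp M(1) by auto
      then show "x \<in> {(i, j). i \<in> {1..n} \<and> j \<in> {1..n} \<and> E i j}"
        using i unfolding g_def V1_def V2_def by auto
    qed
    show "\<forall>(i, j)\<in>g ` M. \<forall>(i', j')\<in>g ` M. (i, j) \<noteq> (i', j') \<longrightarrow> i \<noteq> i' \<and> j \<noteq> j'"
    proof -
      have key: "fst (g k) \<noteq> fst (g k') \<and> snd (g k) \<noteq> snd (g k')"
        if k: "k \<in> M" "k' \<in> M" "g k \<noteq> g k'" for k k'
      proof -
        have "k \<noteq> k'" using k by auto
        then have "u k \<noteq> u k'" "w k \<noteq> w k'" using M(2,3) k(1,2) by (auto simp: inj_on_eq_iff)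
        moreover have "fst (u k) = 1" "fst (u k') = 1" "fst (w k) = 2" "fst (w k') = 2"
          using Bp M(1) k(1,2) by auto
        ultimately show ?thesis unfolding g_def by (auto simp: prod_eq_iff)
      qed
      show ?thesis
      proof (rule ballI)
        fix x assume x: "x \<in> g ` M"
        obtain i j where xij: "x = (i, j)" by (cases x)
        show "case x of (i, j) \<Rightarrow> \<forall>(i', j')\<in>g ` M. (i, j) \<noteq> (i', j') \<longrightarrow> i \<noteq> i' \<and> j \<noteq> j'"
          unfolding xij prod.case
        proof (rule ballI)
          fix y assume y: "y \<in> g ` M"
          obtain i' j' where yij: "y = (i', j')" by (cases y)
          obtain k k' where "k \<in> M" "k' \<in> M" "x = g k" "y = g k'" using x y by auto
          then show "case y of (i', j') \<Rightarrow> (i, j) \<noteq> (i', j') \<longrightarrow> i \<noteq> i' \<and> j \<noteq> j'"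
          proof -
            have gk: "g k = (i, j)" "g k' = (i', j')" using \<open>x = g k\<close> \<open>y = g k'\<close> xij yij by simp_all
            have "(i, j) \<noteq> (i', j') \<Longrightarrow> i \<noteq> i' \<and> j \<noteq> j'"
              using key[OF \<open>k \<in> M\<close> \<open>k' \<in> M\<close>] unfolding gk by simp
            then show ?thesis unfolding yij prod.case by blast
          qed
        qed
      qed
    qed
  qed
  then have "card (g ` M) \<le> max_matching n E" by (rule matching_le_max)
  then have cM: "card M \<le> max_matching n E" using card_image[OF ginj] by simp
  have "card {a. 2 \<le> card {i\<in>B. u i = a}} \<le> card P1" using PU fP by (intro card_mono) auto
  moreover have "card {a. 2 \<le> card {i\<in>B. w i = a}} \<le> card P2" using PW fP by (intro card_mono) auto
  ultimately have cB: "card B \<le> max_matching n E + card P1 + card P2" using M(4) cM by linarith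

  have "card P1 + card Q1 = card V1"
  proof -
    have "P1 \<union> Q1 = V1" "P1 \<inter> Q1 = {}" by (auto simp: P1_def Q1_def)
    then show ?thesis using card_Un_disjoint[OF fP(1)] fV by (metis finite_Un)
  qed
  moreover have "card P2 + card Q2 = card V2"
  proof -
    have "P2 \<union> Q2 = V2" "P2 \<inter> Q2 = {}" by (auto simp: P2_def Q2_def)
    then show ?thesis using card_Un_disjoint[OF fP(2)] fV by (metis finite_Un)
  qed
  moreover have "card V1 = n" "card V2 = n" by (simp_all add: V1_def V2_def)
  ultimately have "card I \<le> 3*n + max_matching n E" using cI cA cZ cC cB by linarith
  moreover have "tour_cost (Gp_edge n E) xs + card I = 2 * N"
    using cost_count[of "Gp_edge n E" xs] unfolding I_def N_def by simp
  ultimately show ?thesis using N by linarith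
qed


lemma match_uniq: "bip_matching n E M \<Longrightarrow> (a,b) \<in> M \<Longrightarrow> (a',b') \<in> M \<Longrightarrow> a = a' \<or> b = b' \<Longrightarrow> a = a' \<and> b = b'"
  unfolding bip_matching_def by fastforce

lemma match_card_fst: "bip_matching n E M \<Longrightarrow> card (fst ` M) = card M"
  by (rule card_image, rule inj_onI) (auto dest: match_uniq)

lemma match_card_snd: "bip_matching n E M \<Longrightarrow> card (snd ` M) = card M"
  by (rule card_image, rule inj_onI) (auto dest: match_uniq)

lemma match_sub: "bip_matching n E M \<Longrightarrow> (a,b) \<in> M \<Longrightarrow> a \<in> {1..n} \<and> b \<in> {1..n} \<and> E a b"
  unfolding bip_matching_def by auto

lemma perm_extend:
  assumes M: "bip_matching n E M"
  shows "\<exists>\<sigma>. \<sigma> ` {1..n} \<subseteq> {1..n} \<and> inj_on \<sigma> {1..n} \<and> (\<forall>a b. (a,b) \<in> M \<longrightarrow> \<sigma> a = b)"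
proof -
  define D1 where "D1 = fst ` M"
  define D2 where "D2 = snd ` M"
  have MS: "M \<subseteq> {1..n} \<times> {1..n}" using match_sub[OF M] by auto
  have D1s: "D1 \<subseteq> {1..n}" and D2s: "D2 \<subseteq> {1..n}" using MS by (auto simp: D1_def D2_def)
  have fin: "finite D1" "finite D2" using D1s D2s finite_subset by auto
  have "card ({1..n} - D1) = card ({1..n} - D2)"
    using card_Diff_subset[OF fin(1) D1s] card_Diff_subset[OF fin(2) D2s]
      match_card_fst[OF M] match_card_snd[OF M] by (simp add: D1_def D2_def)
  then obtain g where g: "bij_betw g ({1..n} - D1) ({1..n} - D2)"
    using finite_same_card_bij by blast
  define \<sigma> where "\<sigma> a = (if a \<in> D1 then (SOME b. (a,b) \<in> M) else g a)" for a
  have sM: "(a, \<sigma> a) \<in> M" if "a \<in> D1" for a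
  proof -
    from that obtain p where "p \<in> M" "a = fst p" unfolding D1_def by blast
    then obtain b where "(a,b) \<in> M" by (metis prod.collapse)
    then show ?thesis unfolding \<sigma>_def using that by (auto intro: someI)
  qed
  have part: "\<sigma> a = b" if "(a,b) \<in> M" for a b
  proof -
    have "a \<in> D1" using that by (force simp: D1_def)
    from match_uniq[OF M that sM[OF this]] show ?thesis by simp
  qed
  have rng: "\<sigma> a \<in> {1..n}" if "a \<in> {1..n}" for a
  proof (cases "a \<in> D1")
    case True then show ?thesis using sM[OF True] MS by auto
  next
    case False then show ?thesis using g that unfolding \<sigma>_def bij_betw_def by auto
  qed
  have inj: "inj_on \<sigma> {1..n}"
  proof (rule inj_onI)
    fix a a' assume a: "a \<in> {1..n}" "a' \<in> {1..n}" "\<sigma> a = \<sigma> a'"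
    show "a = a'"
    proof (cases "a \<in> D1"; cases "a' \<in> D1")
      assume "a \<in> D1" "a' \<in> D1"
      then show ?thesis using match_uniq[OF M sM sM] a(3) by blast
    next
      assume h: "a \<in> D1" "a' \<notin> D1"
      then have "\<sigma> a \<in> D2" using sM[OF h(1)] by (force simp: D2_def)
      moreover have "\<sigma> a' \<notin> D2" using h g a(2) unfolding \<sigma>_def bij_betw_def by auto
      ultimately show ?thesis using a(3) by simp
    next
      assume h: "a \<notin> D1" "a' \<in> D1"
      then have "\<sigma> a' \<in> D2" using sM[OF h(2)] by (force simp: D2_def)
      moreover have "\<sigma> a \<notin> D2" using h g a(1) unfolding \<sigma>_def bij_betw_def by auto
      ultimately show ?thesis using a(3) by simp
    next
      assume h: "a \<notin> D1" "a' \<notin> D1"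
      then show ?thesis using g a unfolding \<sigma>_def bij_betw_def inj_on_def by auto
    qed
  qed
  show ?thesis using rng inj part by blast
qed

definition eix :: "nat \<Rightarrow> nat" where "eix i = 2*i + 2"
definition cix :: "nat \<Rightarrow> nat \<Rightarrow> nat" where "cix n i = (2*i + 2) mod n + 1"

definition blk :: "nat \<Rightarrow> (nat \<Rightarrow> nat) \<Rightarrow> nat \<Rightarrow> nat \<times> nat" where
  "blk n \<sigma> k = (let i = k div 8; r = k mod 8 in
     if r = 0 then (0, i+1) else if r = 1 then (1, eix i) else if r = 2 then (2, \<sigma> (eix i))
     else if r = 3 then (3, \<sigma> (eix i)) else if r = 4 then (4, i+1) else if r = 5 then (3, \<sigma> (cix n i))
     else if r = 6 then (2, \<sigma> (cix n i)) else (1, cix n i))"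

lemma blk_eq: "r < 8 \<Longrightarrow> blk n \<sigma> (8*i + r) =
    (if r = 0 then (0, i+1) else if r = 1 then (1, eix i) else if r = 2 then (2, \<sigma> (eix i))
     else if r = 3 then (3, \<sigma> (eix i)) else if r = 4 then (4, i+1) else if r = 5 then (3, \<sigma> (cix n i))
     else if r = 6 then (2, \<sigma> (cix n i)) else (1, cix n i))"
proof -
  assume r: "r < 8"
  have d: "(8*i + r) div 8 = i" "(8*i + r) mod 8 = r" using r by auto
  show ?thesis unfolding blk_def Let_def d by simp
qed

lemma r8: "(r::nat) < 8 \<Longrightarrow> r = 0 \<or> r = 1 \<or> r = 2 \<or> r = 3 \<or> r = 4 \<or> r = 5 \<or> r = 6 \<or> r = 7"
  by auto

lemma cix_alt: "n = 2*h \<Longrightarrow> cix n i = 2 * ((i+1) mod h) + 1"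
  unfolding cix_def by (simp add: mult_mod_right)

lemma cix_props: assumes "n = 2*h" "i < h"
  shows "cix n i \<in> {1..n}" "odd (cix n i)"
proof -
  have "(i+1) mod h < h" using assms(2) by simp
  then show "cix n i \<in> {1..n}" "odd (cix n i)" using assms(1) cix_alt[OF assms(1)] by auto
qed

lemma eix_props: "n = 2*h \<Longrightarrow> i < h \<Longrightarrow> eix i \<in> {1..n} \<and> even (eix i)"
  unfolding eix_def by auto

lemma cix_inj: assumes "n = 2*h" "i < h" "i' < h" "cix n i = cix n i'" shows "i = i'"
proof -
  have "(i+1) mod h = (i'+1) mod h" using assms cix_alt[OF assms(1)] by simp
  then show ?thesis using suc_mod_inj assms(2,3) by blast
qed


lemma blk_edge:
  assumes nh: "n = 2*h" and i: "i < h" and r: "r < 8"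
    and \<sigma>: "\<sigma> ` {1..n} \<subseteq> {1..n}" and M\<sigma>: "\<forall>a b. (a,b)\<in>M \<longrightarrow> \<sigma> a = b" and M: "bip_matching n E M"
    and notS: "\<not> ((r = 1 \<and> eix i \<notin> fst ` M) \<or> (r = 6 \<and> cix n i \<notin> fst ` M))"
  shows "Gp_edge n E (blk n \<sigma> (8*i+r)) (blk n \<sigma> ((8*i+r+1) mod (8*h)))"
proof -
  have hd: "n div 2 = h" using nh by simp
  have e: "eix i \<in> {1..n}" using eix_props[OF nh i] by simp
  have c: "cix n i \<in> {1..n}" using cix_props[OF nh i] by simp
  have se: "\<sigma> (eix i) \<in> {1..n}" using e \<sigma> by (meson image_subset_iff)
  have sc: "\<sigma> (cix n i) \<in> {1..n}" using c \<sigma> by (meson image_subset_iff)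
  have ih: "i + 1 \<in> {1..n div 2}" using i hd by simp
  show ?thesis
  proof (cases "r = 7")
    case True
    have "(8*i+r+1) mod (8*h) = 8 * ((i+1) mod h) + 0" using True by (simp add: mult_mod_right)
    then have nx: "blk n \<sigma> ((8*i+r+1) mod (8*h)) = (0, (i+1) mod h + 1)"
      using blk_eq[of 0 n \<sigma> "(i+1) mod h"] by simp
    have cur: "blk n \<sigma> (8*i+r) = (1, cix n i)" using blk_eq[of r n \<sigma> i] True by simp
    have "(i+1) mod h < h" using i by simp
    then have j: "(i+1) mod h + 1 \<in> {1..n div 2}" using hd by simp
    have "cix n i = 2 * ((i+1) mod h + 1) - 1" using cix_alt[OF nh] by simp
    then show ?thesis unfolding nx cur Gp_edge_def using j by simp
  next
    case False
    then have "8*i+r+1 < 8*h" using i r by linarith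
    then have "(8*i+r+1) mod (8*h) = 8*i + (r+1)" by simp
    then have nx: "blk n \<sigma> ((8*i+r+1) mod (8*h)) = blk n \<sigma> (8*i + (r+1))" by simp
    have r7: "r+1 < 8" using False r by simp
    show ?thesis
    proof -
      have "r = 0 \<or> r = 1 \<or> r = 2 \<or> r = 3 \<or> r = 4 \<or> r = 5 \<or> r = 6" using r False by linarith
      moreover have "r = 1 \<Longrightarrow> ?thesis"
      proof -
        assume r1: "r = 1"
        then have "eix i \<in> fst ` M" using notS by simp
        then obtain b where b: "(eix i, b) \<in> M" by force
        then have "\<sigma> (eix i) = b" "E (eix i) b" using M\<sigma> match_sub[OF M b] by auto
        then show ?thesis unfolding nx blk_eq[OF r] blk_eq[OF r7] using r1 e se
          by (simp add: Gp_edge_def)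
      qed
      moreover have "r = 6 \<Longrightarrow> ?thesis"
      proof -
        assume r1: "r = 6"
        then have "cix n i \<in> fst ` M" using notS by simp
        then obtain b where b: "(cix n i, b) \<in> M" by force
        then have "\<sigma> (cix n i) = b" "E (cix n i) b" using M\<sigma> match_sub[OF M b] by auto
        then show ?thesis unfolding nx blk_eq[OF r] blk_eq[OF r7] using r1 c sc
          by (simp add: Gp_edge_def)
      qed
      moreover have "r = 0 \<Longrightarrow> ?thesis" unfolding nx blk_eq[OF r] blk_eq[OF r7] using ih
        by (simp add: Gp_edge_def eix_def)
      moreover have "r = 2 \<Longrightarrow> ?thesis" unfolding nx blk_eq[OF r] blk_eq[OF r7] using se
        by (simp add: Gp_edge_def)
      moreover have "r = 3 \<Longrightarrow> ?thesis" unfolding nx blk_eq[OF r] blk_eq[OF r7] using se ih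
        by (simp add: Gp_edge_def)
      moreover have "r = 4 \<Longrightarrow> ?thesis" unfolding nx blk_eq[OF r] blk_eq[OF r7] using sc ih
        by (simp add: Gp_edge_def)
      moreover have "r = 5 \<Longrightarrow> ?thesis" unfolding nx blk_eq[OF r] blk_eq[OF r7] using sc
        by (simp add: Gp_edge_def)
      ultimately show ?thesis by blast
    qed
  qed
qed

lemma blk_in:
  assumes nh: "n = 2*h" and i: "i < h" and r: "r < 8" and \<sigma>: "\<sigma> ` {1..n} \<subseteq> {1..n}"
  shows "blk n \<sigma> (8*i+r) \<in> Gp_verts n"
proof -
  have hd: "n div 2 = h" using nh by simp
  have e: "eix i \<in> {1..n}" using eix_props[OF nh i] by simp
  have c: "cix n i \<in> {1..n}" using cix_props[OF nh i] by simp
  have se: "\<sigma> (eix i) \<in> {1..n}" using e \<sigma> by (meson image_subset_iff)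
  have sc: "\<sigma> (cix n i) \<in> {1..n}" using c \<sigma> by (meson image_subset_iff)
  have ih: "i + 1 \<in> {1..n div 2}" using i hd by simp
  show ?thesis unfolding blk_eq[OF r] Gp_verts_def using e c se sc ih by auto
qed

lemma blk_inj:
  assumes nh: "n = 2*h" and i: "i < h" and r: "r < 8" and i': "i' < h" and r': "r' < 8"
    and \<sigma>: "inj_on \<sigma> {1..n}"
    and eq: "blk n \<sigma> (8*i+r) = blk n \<sigma> (8*i'+r')"
  shows "i = i' \<and> r = r'"
proof -
  have e: "eix i \<in> {1..n}" "eix i' \<in> {1..n}" using eix_props[OF nh i] eix_props[OF nh i'] by simp_all
  have c: "cix n i \<in> {1..n}" "cix n i' \<in> {1..n}" using cix_props[OF nh i] cix_props[OF nh i'] by simp_all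
  have ec: "eix i \<noteq> cix n i'" "eix i' \<noteq> cix n i" using eix_props[OF nh i] eix_props[OF nh i']
      cix_props[OF nh i] cix_props[OF nh i'] by auto
  have ee: "eix i = eix i' \<longleftrightarrow> i = i'" by (auto simp: eix_def)
  have cc: "cix n i = cix n i' \<longleftrightarrow> i = i'" using cix_inj[OF nh i i'] by auto
  have s1: "\<sigma> (eix i) = \<sigma> (eix i') \<longleftrightarrow> i = i'" using \<sigma> e ee by (auto simp: inj_on_eq_iff)
  have s2: "\<sigma> (cix n i) = \<sigma> (cix n i') \<longleftrightarrow> i = i'" using \<sigma> c cc by (auto simp: inj_on_eq_iff)
  have s3: "\<sigma> (eix i) \<noteq> \<sigma> (cix n i')" "\<sigma> (eix i') \<noteq> \<sigma> (cix n i)" using \<sigma> e c ec by (auto simp: inj_on_eq_iff)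
  note eq' = eq[unfolded blk_eq[OF r] blk_eq[OF r']]
  show ?thesis using r8[OF r] r8[OF r'] eq' ee cc s1 s2 s3 ec
    by (elim disjE) (simp_all)
qed


lemma upper:
  assumes ev: "even n" and M: "bip_matching n E M"
  shows "\<exists>xs. is_tour (Gp_verts n) xs \<and> tour_cost (Gp_edge n E) xs \<le> 5*n - card M"
proof (cases "n = 0")
  case True
  have "Gp_verts n = {}" using True by (simp add: Gp_verts_def)
  then show ?thesis using True by (intro exI[of _ "[]"]) (simp add: is_tour_def tour_cost_def)
next
  case False
  define h where "h = n div 2"
  have nh: "n = 2*h" using ev by (simp add: h_def)
  obtain \<sigma> where \<sigma>: "\<sigma> ` {1..n} \<subseteq> {1..n}" "inj_on \<sigma> {1..n}" "\<forall>a b. (a,b)\<in>M \<longrightarrow> \<sigma> a = b"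
    using perm_extend[OF M] by blast
  define N where "N = 8*h"
  define f where "f = blk n \<sigma>"
  define xs where "xs = map f [0..<N]"
  have len: "length xs = N" by (simp add: xs_def)
  have nth: "k < N \<Longrightarrow> xs ! k = f k" for k by (simp add: xs_def)
  have dec: "k = 8*(k div 8) + k mod 8 \<and> k div 8 < h \<and> k mod 8 < 8" if "k < N" for k
    using that by (auto simp: N_def)
  have kk: "8*(k div 8) + k mod 8 = k" for k :: nat by simp
  have fin: "f k \<in> Gp_verts n" if "k < N" for k
    using blk_in[OF nh _ _ \<sigma>(1), of "k div 8" "k mod 8"] dec[OF that] unfolding f_def kk by blast
  have finj: "inj_on f {0..<N}"
  proof (rule inj_onI)
    fix k k' assume k: "k \<in> {0..<N}" "k' \<in> {0..<N}" "f k = f k'"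
    have d: "k = 8*(k div 8) + k mod 8" "k div 8 < h" "k mod 8 < 8" using dec k(1) by auto
    have d': "k' = 8*(k' div 8) + k' mod 8" "k' div 8 < h" "k' mod 8 < 8" using dec k(2) by auto
    have "blk n \<sigma> (8*(k div 8) + k mod 8) = blk n \<sigma> (8*(k' div 8) + k' mod 8)"
      using k(3) unfolding f_def kk .
    from blk_inj[OF nh d(2,3) d'(2,3) \<sigma>(2) this] have "k div 8 = k' div 8 \<and> k mod 8 = k' mod 8" .
    then show "k = k'" by (metis kk)
  qed
  have fV: "finite (Gp_verts n)" by (simp add: Gp_verts_def)
  have tour: "is_tour (Gp_verts n) xs"
  proof -
    have "distinct xs" unfolding xs_def using finj by (simp add: distinct_map)
    moreover have "set xs = Gp_verts n"
    proof (rule card_subset_eq[OF fV])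
      show "set xs \<subseteq> Gp_verts n" using fin unfolding xs_def by auto
      have "card (set xs) = N" using distinct_card[OF \<open>distinct xs\<close>] len by simp
      then show "card (set xs) = card (Gp_verts n)" using card_Gp_verts[OF ev] nh N_def by simp
    qed
    ultimately show ?thesis by (simp add: is_tour_def)
  qed
  define S where "S = {k. k < N \<and> ((k mod 8 = 1 \<and> eix (k div 8) \<notin> fst ` M) \<or> (k mod 8 = 6 \<and> cix n (k div 8) \<notin> fst ` M))}"
  have Dk: "D12 (Gp_edge n E) (xs ! k) (xs ! ((k + 1) mod length xs)) \<le> (if k \<in> S then 2 else 1)"
    if k: "k < N" for k
  proof (cases "k \<in> S")
    case True then show ?thesis by (simp add: D12_def)
  next
    case False
    have d: "k = 8*(k div 8) + k mod 8" "k div 8 < h" "k mod 8 < 8" using dec k by auto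
    have ns: "\<not> ((k mod 8 = 1 \<and> eix (k div 8) \<notin> fst ` M) \<or> (k mod 8 = 6 \<and> cix n (k div 8) \<notin> fst ` M))"
      using False k by (simp add: S_def)
    have "Gp_edge n E (blk n \<sigma> (8*(k div 8)+k mod 8)) (blk n \<sigma> ((8*(k div 8)+k mod 8+1) mod (8*h)))"
      by (rule blk_edge[OF nh d(2,3) \<sigma>(1) \<sigma>(3) M ns])
    then have "Gp_edge n E (f k) (f ((k+1) mod N))" unfolding f_def N_def kk .
    moreover have "(k+1) mod N < N" using k by (auto intro: mod_less_divisor)
    ultimately show ?thesis using nth k False len by (simp add: D12_def)
  qed
  have "tour_cost (Gp_edge n E) xs \<le> (\<Sum>k<N. if k \<in> S then 2 else 1)"
    unfolding tour_cost_def len by (rule sum_mono) (use Dk len in auto)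
  also have "\<dots> = N + card S"
  proof -
    have "(\<Sum>k<N. if k \<notin> S then 1 else 2::nat) + card {k. k < N \<and> k \<notin> S} = 2 * N"
      by (rule cost_count_aux)
    moreover have "card {k. k < N \<and> k \<notin> S} + card S = N"
    proof -
      have "{k. k < N \<and> k \<notin> S} \<union> S = {..<N}" "{k. k < N \<and> k \<notin> S} \<inter> S = {}"
        by (auto simp: S_def)
      moreover have "finite S" by (auto simp: S_def)
      ultimately show ?thesis using card_Un_disjoint[of "{k. k < N \<and> k \<notin> S}" S] by simp
    qed
    moreover have "(\<Sum>k<N. if k \<in> S then 2 else 1::nat) = (\<Sum>k<N. if k \<notin> S then 1 else 2)"
      by (rule sum.cong) auto
    ultimately show ?thesis by linarith
  qed
  also have "\<dots> \<le> 5*n - card M"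
  proof -
    define a where "a k = (if k mod 8 = 1 then eix (k div 8) else cix n (k div 8))" for k
    have "inj_on a S"
    proof (rule inj_onI)
      fix k k' assume k: "k \<in> S" "k' \<in> S" "a k = a k'"
      have d: "k = 8*(k div 8) + k mod 8" "k div 8 < h" using dec k(1) by (auto simp: S_def)
      have d': "k' = 8*(k' div 8) + k' mod 8" "k' div 8 < h" using dec k(2) by (auto simp: S_def)
      have r: "k mod 8 = 1 \<or> k mod 8 = 6" "k' mod 8 = 1 \<or> k' mod 8 = 6" using k by (auto simp: S_def)
      have ev1: "even (eix (k div 8))" "even (eix (k' div 8))" using eix_props[OF nh] d(2) d'(2) by auto
      have od: "odd (cix n (k div 8))" "odd (cix n (k' div 8))" using cix_props[OF nh] d(2) d'(2) by auto
      have "k div 8 = k' div 8 \<and> k mod 8 = k' mod 8"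
      proof -
        have einj: "eix (k div 8) = eix (k' div 8) \<Longrightarrow> k div 8 = k' div 8" by (simp add: eix_def)
        have ne1: "eix (k div 8) \<noteq> cix n (k' div 8)"
        proof
          assume h: "eix (k div 8) = cix n (k' div 8)"
          have "even (cix n (k' div 8))" using ev1(1) unfolding h .
          with od(2) show False by blast
        qed
        have ne2: "cix n (k div 8) \<noteq> eix (k' div 8)"
        proof
          assume h: "cix n (k div 8) = eix (k' div 8)"
          have "even (cix n (k div 8))" using ev1(2) unfolding h[symmetric] .
          with od(1) show False by blast
        qed
        have eq: "(if k mod 8 = 1 then eix (k div 8) else cix n (k div 8)) =
          (if k' mod 8 = 1 then eix (k' div 8) else cix n (k' div 8))" using k(3) unfolding a_def .
        show ?thesis
        proof (cases "k mod 8 = 1"; cases "k' mod 8 = 1")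
          assume "k mod 8 = 1" "k' mod 8 = 1" then show ?thesis using eq einj by simp
        next
          assume "k mod 8 = 1" "k' mod 8 \<noteq> 1" then show ?thesis using eq ne1 by simp
        next
          assume "k mod 8 \<noteq> 1" "k' mod 8 = 1" then show ?thesis using eq ne2 by simp
        next
          assume "k mod 8 \<noteq> 1" "k' mod 8 \<noteq> 1" then show ?thesis
            using eq r cix_inj[OF nh d(2) d'(2)] by simp
        qed
      qed
      then have "8*(k div 8) + k mod 8 = 8*(k' div 8) + k' mod 8" by simp
      then show "k = k'" unfolding kk .
    qed
    moreover have "a ` S \<subseteq> {1..n} - fst ` M"
    proof
      fix x assume "x \<in> a ` S"
      then obtain k where k: "k \<in> S" "x = a k" by auto
      have d: "k div 8 < h" using dec k(1) by (auto simp: S_def)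
      have c: "(k mod 8 = 1 \<and> eix (k div 8) \<notin> fst ` M) \<or> (k mod 8 = 6 \<and> cix n (k div 8) \<notin> fst ` M)"
        using k(1) by (simp add: S_def)
      show "x \<in> {1..n} - fst ` M"
      proof (cases "k mod 8 = 1")
        case True
        then have "x = eix (k div 8)" using k(2) by (simp add: a_def)
        then show ?thesis using c True eix_props[OF nh d] by simp
      next
        case False
        then have "x = cix n (k div 8)" using k(2) by (simp add: a_def)
        then show ?thesis using c False cix_props[OF nh d] by simp
      qed
    qed
    ultimately have "card S \<le> card ({1..n} - fst ` M)"
      using card_inj_on_le[of a S "{1..n} - fst ` M"] by simp
    also have "\<dots> = n - card M"
    proof -
      have sub: "fst ` M \<subseteq> {1..n}" using match_sub[OF M] by auto
      have "finite (fst ` M)" using finite_subset[OF sub] by simp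
      from card_Diff_subset[OF this sub] show ?thesis using match_card_fst[OF M] by simp
    qed
    finally have "card S \<le> n - card M" .
    moreover have "card M \<le> n"
    proof -
      have "fst ` M \<subseteq> {1..n}" using match_sub[OF M] by auto
      then have "card (fst ` M) \<le> n" using card_mono[of "{1..n}" "fst ` M"] by simp
      then show ?thesis using match_card_fst[OF M] by simp
    qed
    ultimately show ?thesis using nh N_def by linarith
  qed
  finally show ?thesis using tour by blast
qed

theorem mainTheorem19:
  fixes n :: nat and E :: "nat \<Rightarrow> nat \<Rightarrow> bool"
  assumes "even n"
  shows "(\<forall>M. bip_matching n E M \<longrightarrow>
            (\<exists>xs. is_tour (Gp_verts n) xs \<and> tour_cost (Gp_edge n E) xs \<le> 5 * n - card M))
       \<and> (\<forall>xs. is_tour (Gp_verts n) xs \<longrightarrow> tour_cost (Gp_edge n E) xs \<ge> 5 * n - max_matching n E)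
       \<and> card (Gp_verts n) = 4 * n
       \<and> opt_tsp (Gp_verts n) (Gp_edge n E) = 5 * n - max_matching n E"
proof -
  have pa: "\<forall>M. bip_matching n E M \<longrightarrow>
            (\<exists>xs. is_tour (Gp_verts n) xs \<and> tour_cost (Gp_edge n E) xs \<le> 5 * n - card M)"
    using upper[OF assms] by blast
  have pb: "\<forall>xs. is_tour (Gp_verts n) xs \<longrightarrow> tour_cost (Gp_edge n E) xs \<ge> 5 * n - max_matching n E"
    using lower_bound[OF assms] by blast
  have pc: "card (Gp_verts n) = 4 * n" using card_Gp_verts[OF assms] .
  define T where "T = {tour_cost (Gp_edge n E) xs | xs. is_tour (Gp_verts n) xs}"
  obtain M0 where M0: "bip_matching n E M0" "card M0 = max_matching n E"
    using max_matching_attained by blast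
  obtain xs0 where xs0: "is_tour (Gp_verts n) xs0" "tour_cost (Gp_edge n E) xs0 \<le> 5 * n - max_matching n E"
    using pa M0 by metis
  have in0: "5 * n - max_matching n E \<in> T"
    using xs0 pb unfolding T_def by (metis (mono_tags, lifting) le_antisym mem_Collect_eq)
  have fT: "finite T"
  proof (rule finite_subset)
    show "T \<subseteq> {..2 * (4 * n)}"
    proof
      fix t assume "t \<in> T"
      then obtain xs where xs: "t = tour_cost (Gp_edge n E) xs" "is_tour (Gp_verts n) xs" unfolding T_def by blast
      have "length xs = 4 * n" using xs(2) pc distinct_card[of xs] by (simp add: is_tour_def)
      then show "t \<in> {..2 * (4 * n)}" using cost_count[of "Gp_edge n E" xs] xs(1) by simp
    qed
  qed simp
  have "Min T = 5 * n - max_matching n E"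
    by (rule Min_eqI[OF fT _ in0]) (use pb in \<open>auto simp: T_def\<close>)
  then have pd: "opt_tsp (Gp_verts n) (Gp_edge n E) = 5 * n - max_matching n E"
    unfolding opt_tsp_def T_def .
  show ?thesis using pa pb pc pd by blast
qed

end
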